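(* In the setting and for the algorithm OOPE described in the context, let $l_M$ denote the number of phases up to and including the penultimate phase (the last phase being the one in which the online samples are exhausted). Define $H^{-1}:\mathbb{R}_{\ge0}\to\mathbb{N}\cup\{0\}$ by $H^{-1}(x)=\max\{n\in\mathbb{N}\cup\{0\}:\sum_{l=1}^n4^l\log(4l^2|\mathcal{A}|T)\le x\}$. Then $l_M\le H^{-1}\big(\frac{T}{3d_{\mathrm{eff}}}\big)$.
   Context: Setting: $\mathcal{A}\subset\mathbb{R}^d$ finite, known, $\mathrm{span}(\mathcal{A})=\mathbb{R}^d$; unknown $\theta^*\in\mathbb{R}^d$; pulling $a$ yields $\langle\theta^*,a\rangle+\eta$, $\eta$ zero-mean 1-sub-Gaussian independent; $T_{\mathrm{off}}$ offline samples collected non-adaptively by fixed $\pi_{\mathrm{off}}\in\Delta(\mathcal{A})$ ($\pi_{\mathrm{off}}(a)T_{\mathrm{off}}$ from arm $a$, same reward law); then $T$ online rounds. Notation: $V_\pi=\sum_a\pi(a)aa^\top$, $g_{\mathcal{B}}(\pi)=\max_{a\in\mathcal{B}}a^\top V_\pi^{-1}a$, $\lambda_k$ the $k$-th smallest eigenvalue, $d_{\mathrm{eff}}=\min\big(\sum_{k=1}^d(1+\frac{T_{\mathrm{off}}}{T}\frac{\lambda_k(V_{\pi_{\mathrm{off}}})}{\max_a\|a\|^2})^{-1},\frac{T}{T_{\mathrm{off}}}g_{\mathcal{A}}(\pi_{\mathrm{off}})\big)$. Algorithm OOPE: $\alpha=T_{\mathrm{off}}/(T_{\mathrm{off}}+T)$,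 $\mathcal{A}_1=\mathcal{A}$. Phase $l$: if $|\mathcal{A}_l|=1$ pull its arm for all remaining rounds. Else $\epsilon_l=2^{-l}$, $\pi^*_{l,\mathrm{on}}\in\arg\max_{\pi\in\Delta(\mathcal{A}_l)}\log\det V_{(1-\alpha)\pi+\alpha\pi_{\mathrm{off}}}$, $\tilde\pi_l=(1-\alpha)\pi^*_{l,\mathrm{on}}+\alpha\pi_{\mathrm{off}}$; for each arm $a$ in turn take $n^l_{\mathrm{on}}(a)=\lceil3d_{\mathrm{eff}}\pi^*_{l,\mathrm{on}}(a)\log(4l^2|\mathcal{A}|T)/\epsilon_l^2\rceil$ new online pulls and request $n^l_{\mathrm{off}}(a)=\lceil2\alpha\pi_{\mathrm{off}}(a)g_{\mathcal{A}_l}(\tilde\pi_l)\log(4l^2|\mathcal{A}|T)/\epsilon_l^2\rceil$ offline samples of $a$ not used before (all remaining if fewer). If the online budget would be exceeded, the remaining rounds are used and the algorithm stops without elimination. Otherwise compute the least-squares estimate $\hat\theta_l$ from phase-$l$ samples only, and set $\mathcal{A}_{l+1}=\mathcal{A}_l\setminus\{a:\max_{a'\in\mathcal{A}_l}\langle a'-a,\hat\theta_l\rangle\ge2\epsilon_l\}$. *)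

theory Defs
  imports "HOL-Analysis.Analysis" "HOL-Computational_Algebra.Polynomial"
begin

(* Arms live in R^d, rendered as real^'n with d = CARD('n). *)

definition distr_on :: "'b set \<Rightarrow> ('b \<Rightarrow> real) \<Rightarrow> bool" where
  "distr_on B p \<longleftrightarrow> (\<forall>a. 0 \<le> p a) \<and> (\<forall>a. a \<notin> B \<longrightarrow> p a = 0) \<and> sum p B = 1"

definition outer :: "real^'n \<Rightarrow> real^'n^'n" where
  "outer a = (\<chi> i j. a$i * a$j)"

definition Vmat :: "(real^'n) set \<Rightarrow> (real^'n \<Rightarrow> real) \<Rightarrow> real^'n^'n" where
  "Vmat A p = (\<Sum>a\<in>A. p a *\<^sub>R outer a)"

definition gfun :: "(real^'n) set \<Rightarrow> (real^'n) set \<Rightarrow> (real^'n \<Rightarrow> real) \<Rightarrow> ereal" where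
  "gfun A B p = (if invertible (Vmat A p)
      then ereal (Max ((\<lambda>a. a \<bullet> (matrix_inv (Vmat A p) *v a)) ` B)) else \<infinity>)"

definition logdet :: "real^'n^'n \<Rightarrow> ereal" where
  "logdet M = (if 0 < det M then ereal (ln (det M)) else -\<infinity>)"

definition charpoly :: "real^'n^'n \<Rightarrow> real poly" where
  "charpoly M = det (\<chi> i j. if i = j then [:- (M$i$j), 1:] else [:- (M$i$j):])"

text \<open>Eigenvalues with multiplicity in ascending order (for symmetric M the characteristic
  polynomial splits over the reals), and lambda_k = k-th smallest eigenvalue, k = 1..d.\<close>
definition eigs_sorted :: "real^'n^'n \<Rightarrow> real list" where
  "eigs_sorted M = (THE ls. sorted ls \<and> length ls = CARD('n) \<and>
      charpoly M = prod_list (map (\<lambda>x. [:- x, 1:]) ls))"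

definition eigk :: "real^'n^'n \<Rightarrow> nat \<Rightarrow> real" where
  "eigk M k = eigs_sorted M ! (k - 1)"

definition deff :: "(real^'n) set \<Rightarrow> nat \<Rightarrow> nat \<Rightarrow> (real^'n \<Rightarrow> real) \<Rightarrow> real" where
  "deff A T Toff poff = real_of_ereal (min
     (ereal (\<Sum>k=1..CARD('n). inverse (1 + (real Toff / real T) *
          eigk (Vmat A poff) k / Max ((\<lambda>a. (norm a)\<^sup>2) ` A))))
     (if Toff = 0 then \<infinity> else ereal (real T / real Toff) * gfun A A poff))"

definition logterm :: "(real^'n) set \<Rightarrow> nat \<Rightarrow> nat \<Rightarrow> real" where
  "logterm A T l = ln (4 * real l ^ 2 * real (card A) * real T)"

definition epsl :: "nat \<Rightarrow> real" where
  "epsl l = (1/2) ^ l"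

definition alpha :: "nat \<Rightarrow> nat \<Rightarrow> real" where
  "alpha T Toff = real Toff / (real Toff + real T)"

definition Hinv :: "(real^'n) set \<Rightarrow> nat \<Rightarrow> real \<Rightarrow> nat" where
  "Hinv A T x = Max {n::nat. (\<Sum>l=1..n. 4 ^ l * logterm A T l) \<le> x}"

definition non :: "(real^'n) set \<Rightarrow> nat \<Rightarrow> nat \<Rightarrow> (real^'n \<Rightarrow> real)
     \<Rightarrow> (nat \<Rightarrow> real^'n \<Rightarrow> real) \<Rightarrow> nat \<Rightarrow> real^'n \<Rightarrow> nat" where
  "non A T Toff poff pis l a =
     nat \<lceil>3 * deff A T Toff poff * pis l a * logterm A T l / (epsl l)\<^sup>2\<rceil>"

definition onUsed :: "(real^'n) set \<Rightarrow> nat \<Rightarrow> nat \<Rightarrow> (real^'n \<Rightarrow> real)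
     \<Rightarrow> (nat \<Rightarrow> real^'n \<Rightarrow> real) \<Rightarrow> nat \<Rightarrow> nat" where
  "onUsed A T Toff poff pis l = (\<Sum>j=1..l. \<Sum>a\<in>A. non A T Toff poff pis j a)"

definition mixd :: "nat \<Rightarrow> nat \<Rightarrow> (real^'n \<Rightarrow> real) \<Rightarrow> (real^'n \<Rightarrow> real) \<Rightarrow> real^'n \<Rightarrow> real" where
  "mixd T Toff poff p = (\<lambda>a. (1 - alpha T Toff) * p a + alpha T Toff * poff a)"

text \<open>Offline samples of arm a taken in phase l when u of them were used before
  (requested amount, capped by what remains; all remaining if the request is infinite).\<close>
definition offTake :: "(real^'n) set \<Rightarrow> nat \<Rightarrow> nat \<Rightarrow> (real^'n \<Rightarrow> nat) \<Rightarrow> (real^'n \<Rightarrow> real)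
     \<Rightarrow> (nat \<Rightarrow> (real^'n) set) \<Rightarrow> (nat \<Rightarrow> real^'n \<Rightarrow> real) \<Rightarrow> nat \<Rightarrow> nat \<Rightarrow> real^'n \<Rightarrow> nat" where
  "offTake A T Toff Noff poff Act pis l u a =
     (let g = gfun A (Act l) (mixd T Toff poff (pis l)) in
      if g = \<infinity> then Noff a - u
      else min (Noff a - u)
        (nat \<lceil>2 * alpha T Toff * poff a * real_of_ereal g * logterm A T l / (epsl l)\<^sup>2\<rceil>))"

fun offUsed :: "(real^'n) set \<Rightarrow> nat \<Rightarrow> nat \<Rightarrow> (real^'n \<Rightarrow> nat) \<Rightarrow> (real^'n \<Rightarrow> real)
     \<Rightarrow> (nat \<Rightarrow> (real^'n) set) \<Rightarrow> (nat \<Rightarrow> real^'n \<Rightarrow> real) \<Rightarrow> nat \<Rightarrow> real^'n \<Rightarrow> nat" where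
  "offUsed A T Toff Noff poff Act pis 0 a = 0"
| "offUsed A T Toff Noff poff Act pis (Suc l) a =
     offUsed A T Toff Noff poff Act pis l a +
     offTake A T Toff Noff poff Act pis (Suc l) (offUsed A T Toff Noff poff Act pis l a) a"

text \<open>Least-squares objective on the phase-l samples only: online rewards yon l a j
  (j-th online pull of arm a in phase l) and offline rewards yoff a j (j-th offline sample of a).\<close>
definition lsobj :: "(real^'n) set \<Rightarrow> nat \<Rightarrow> nat \<Rightarrow> (real^'n \<Rightarrow> nat) \<Rightarrow> (real^'n \<Rightarrow> real)
     \<Rightarrow> (nat \<Rightarrow> real^'n \<Rightarrow> nat \<Rightarrow> real) \<Rightarrow> (real^'n \<Rightarrow> nat \<Rightarrow> real)
     \<Rightarrow> (nat \<Rightarrow> (real^'n) set) \<Rightarrow> (nat \<Rightarrow> real^'n \<Rightarrow> real) \<Rightarrow> nat \<Rightarrow> real^'n \<Rightarrow> real" where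
  "lsobj A T Toff Noff poff yon yoff Act pis l \<theta> =
     (\<Sum>a\<in>A. (\<Sum>j<non A T Toff poff pis l a. (yon l a j - \<theta> \<bullet> a)\<^sup>2)
        + (\<Sum>j\<in>{offUsed A T Toff Noff poff Act pis (l - 1) a ..< offUsed A T Toff Noff poff Act pis l a}.
             (yoff a j - \<theta> \<bullet> a)\<^sup>2))"

text \<open>Phases 1..l were all run to completion with an elimination step
  (|A_j| /= 1 and the online budget was not exceeded).\<close>
definition completed :: "(real^'n) set \<Rightarrow> nat \<Rightarrow> nat \<Rightarrow> (real^'n \<Rightarrow> real)
     \<Rightarrow> (nat \<Rightarrow> (real^'n) set) \<Rightarrow> (nat \<Rightarrow> real^'n \<Rightarrow> real) \<Rightarrow> nat \<Rightarrow> bool" where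
  "completed A T Toff poff Act pis l \<longleftrightarrow>
     (\<forall>j\<in>{1..l}. card (Act j) \<noteq> 1 \<and> onUsed A T Toff poff pis j \<le> T)"

text \<open>Act, pis, th form an execution of OOPE on the reward realization (yon, yoff):
  Act l = A_l, pis l = pi*_{l,on} (any maximizer), th l = hat theta_l (any least-squares solution).\<close>
definition oope_run :: "(real^'n) set \<Rightarrow> nat \<Rightarrow> nat \<Rightarrow> (real^'n \<Rightarrow> nat) \<Rightarrow> (real^'n \<Rightarrow> real)
     \<Rightarrow> (nat \<Rightarrow> real^'n \<Rightarrow> nat \<Rightarrow> real) \<Rightarrow> (real^'n \<Rightarrow> nat \<Rightarrow> real)
     \<Rightarrow> (nat \<Rightarrow> (real^'n) set) \<Rightarrow> (nat \<Rightarrow> real^'n \<Rightarrow> real) \<Rightarrow> (nat \<Rightarrow> real^'n) \<Rightarrow> bool" where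
  "oope_run A T Toff Noff poff yon yoff Act pis th \<longleftrightarrow>
     Act 1 = A \<and>
     (\<forall>l\<ge>1. completed A T Toff poff Act pis (l - 1) \<and> card (Act l) \<noteq> 1 \<longrightarrow>
        distr_on (Act l) (pis l) \<and>
        (\<forall>p. distr_on (Act l) p \<longrightarrow>
           logdet (Vmat A (mixd T Toff poff p)) \<le> logdet (Vmat A (mixd T Toff poff (pis l))))) \<and>
     (\<forall>l\<ge>1. completed A T Toff poff Act pis l \<longrightarrow>
        (\<forall>\<theta>. lsobj A T Toff Noff poff yon yoff Act pis l (th l)
              \<le> lsobj A T Toff Noff poff yon yoff Act pis l \<theta>) \<and>
        Act (Suc l) = Act l - {a \<in> Act l. 2 * epsl l \<le> Max ((\<lambda>a'. (a' - a) \<bullet> th l) ` Act l)})"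

end

theory Submission
  imports Defs "HOL-Computational_Algebra.Fundamental_Theorem_Algebra"
begin

lemma hom_prod:
  assumes "h 1 = 1" "\<And>x y. h (x * y) = h x * h y"
  shows "h (prod g S) = prod (\<lambda>x. h (g x)) S"
  by (induct S rule: infinite_finite_induct) (simp_all add: assms)

lemma hom_of_int:
  fixes h :: "'a::comm_ring_1 \<Rightarrow> 'b::comm_ring_1"
  assumes "h 1 = 1" "h 0 = 0" "\<And>x y. h (x + y) = h x + h y" "\<And>x. h (- x) = - h x"
  shows "h (of_int k) = of_int k"
proof -
  have n: "h (of_nat n) = of_nat n" for n
    by (induct n) (simp_all add: assms algebra_simps)
  show ?thesis
  proof (cases "k \<ge> 0")
    case True then obtain n where "k = int n" using nonneg_int_cases by blast
    then show ?thesis using n by simp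
  next
    case False then have "k \<le> 0" by simp
    then obtain n where "k = - int n" using nonpos_int_cases by metis
    then show ?thesis using n assms(4) by simp
  qed
qed

lemma det_hom:
  fixes h :: "'a::comm_ring_1 \<Rightarrow> 'b::comm_ring_1" and A :: "'a^'n^'n"
  assumes "h 1 = 1" "h 0 = 0" "\<And>x y. h (x + y) = h x + h y" "\<And>x. h (- x) = - h x"
    "\<And>x y. h (x * y) = h x * h y"
  shows "h (det A) = det (\<chi> i j. h (A$i$j))"
proof -
  have "h (det A) = (\<Sum>p\<in>{p. p permutes (UNIV::'n set)}. h (of_int (sign p) * prod (\<lambda>i. A$i$p i) UNIV))"
  proof -
    have hs: "h (sum g S) = sum (\<lambda>x. h (g x)) S" for g :: "('n \<Rightarrow> 'n) \<Rightarrow> 'a" and S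
      using sum_comp_morphism[of h g S, OF assms(2) assms(3)] by (simp add: o_def)
    show ?thesis unfolding det_def by (rule hs)
  qed
  also have "\<dots> = (\<Sum>p\<in>{p. p permutes (UNIV::'n set)}. of_int (sign p) * prod (\<lambda>i. h (A$i$p i)) UNIV)"
    by (simp add: assms(5) hom_of_int[of h, OF assms(1-4)] hom_prod[of h, OF assms(1) assms(5)])
  finally show ?thesis unfolding det_def by simp
qed

lemma map_poly_of_real_add: "map_poly of_real (p + q) = map_poly of_real p + (map_poly of_real q :: 'a::real_algebra_1 poly)"
  by (rule poly_eqI) (simp add: coeff_map_poly)

lemma map_poly_of_real_minus: "map_poly of_real (- p) = - (map_poly of_real p :: 'a::real_algebra_1 poly)"
  by (rule poly_eqI) (simp add: coeff_map_poly)

lemma map_poly_of_real_mult: "map_poly of_real (p * q) = map_poly of_real p * (map_poly of_real q :: 'a::{real_algebra_1,comm_ring_1} poly)"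
  by (rule poly_eqI) (simp add: coeff_map_poly coeff_mult of_real_sum)

lemma map_poly_of_real_inj:
  assumes "map_poly of_real p = (map_poly of_real q :: 'a::real_algebra_1 poly)" shows "p = q"
proof (rule poly_eqI)
  fix n have "coeff (map_poly of_real p) n = (coeff (map_poly of_real q) n :: 'a)" using assms by simp
  then show "coeff p n = coeff q n" by (simp add: coeff_map_poly)
qed

lemma charpoly_monic:
  fixes M :: "real^'n^'n"
  shows "degree (charpoly M) = CARD('n) \<and> lead_coeff (charpoly M) = 1"
proof -
  define P :: "real poly^'n^'n" where "P = (\<chi> i j. if i = j then [:- (M$i$j), 1:] else [:- (M$i$j):])"
  define t where "t = (\<lambda>p. of_int (sign p) * prod (\<lambda>i. P$i$p i) (UNIV :: 'n set))"
  have cp: "charpoly M = sum t {p. p permutes (UNIV::'n set)}"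
    unfolding charpoly_def det_def t_def P_def by simp
  have degP: "degree (P$i$j) \<le> (if i = j then 1 else 0)" for i j
    by (simp add: P_def)
  have dprod: "degree (prod (\<lambda>i. P$i$p i) UNIV) \<le> card {i. p i = i}" for p
  proof -
    have "degree (prod (\<lambda>i. P$i$p i) UNIV) \<le> (\<Sum>i\<in>UNIV. degree (P$i$p i))"
      using degree_prod_sum_le[of UNIV "\<lambda>i. P$i$p i"] by (simp add: o_def)
    also have "\<dots> \<le> (\<Sum>i\<in>UNIV. if p i = i then 1 else 0)"
      by (rule sum_mono) (use degP in \<open>auto simp: eq_commute\<close>)
    also have "\<dots> = card {i. p i = i}" by (simp add: sum.If_cases)
    finally show ?thesis .
  qed
  have dt: "degree (t p) \<le> card {i. p i = i}" for p
    unfolding t_def using dprod[of p] degree_mult_le[of "of_int (sign p)" "prod (\<lambda>i. P$i$p i) UNIV"]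
    by simp
  have cardle: "card {i. p i = i} \<le> CARD('n)" for p :: "'n \<Rightarrow> 'n"
    by (rule card_mono) auto
  have cardlt: "card {i. p i = i} < CARD('n)" if "p \<noteq> id" for p :: "'n \<Rightarrow> 'n"
  proof -
    from that obtain i where "p i \<noteq> i" by (auto simp: fun_eq_iff)
    then have "{i. p i = i} \<subset> UNIV" by auto
    then show ?thesis by (rule psubset_card_mono[rotated]) simp
  qed
  have degle: "degree (charpoly M) \<le> CARD('n)"
    unfolding cp by (rule degree_sum_le) (simp_all add: finite_permutations order_trans[OF dt cardle])
  have c0: "coeff (t p) CARD('n) = 0" if "p \<noteq> id" for p
    using dt[of p] cardlt[OF that] by (intro coeff_eq_0) simp
  have tid: "t id = (\<Prod>i\<in>UNIV. [:- (M$i$i), 1:])"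
    unfolding t_def by (simp add: P_def)
  have did: "degree (t id) = CARD('n)"
    unfolding tid by (subst degree_prod_sum_eq) auto
  have lid: "lead_coeff (t id) = 1"
    unfolding tid by (simp add: lead_coeff_prod)
  have "coeff (charpoly M) CARD('n) = (\<Sum>p\<in>{p. p permutes (UNIV::'n set)}. coeff (t p) CARD('n))"
    unfolding cp by (simp add: coeff_sum)
  also have "\<dots> = coeff (t id) CARD('n)"
    by (subst sum.remove[of _ id]) (auto simp: finite_permutations permutes_id c0 intro!: sum.neutral)
  also have "\<dots> = 1" using did lid by simp
  finally have c1: "coeff (charpoly M) CARD('n) = 1" .
  then have "degree (charpoly M) = CARD('n)" using degle le_degree[of "charpoly M" "CARD('n)"] by simp
  with c1 show ?thesis by simp
qed

lemma Vmat_entry: "finite A \<Longrightarrow> Vmat A p $ i $ j = (\<Sum>c\<in>A. p c * (c$i * c$j))"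
  by (simp add: Vmat_def outer_def)

lemma charpoly_root_nonneg:
  fixes A :: "(real^'n) set" and p :: "real^'n \<Rightarrow> real" and z :: complex
  assumes fA: "finite A" and pnn: "\<forall>a. 0 \<le> p a"
    and root: "poly (map_poly complex_of_real (charpoly (Vmat A p))) z = 0"
  shows "z = complex_of_real (Re z) \<and> 0 \<le> Re z"
proof -
  define M where "M = Vmat A p"
  define h where "h = (\<lambda>q. poly (map_poly complex_of_real q) z)"
  have h1: "h 1 = 1" "h 0 = 0" by (simp_all add: h_def)
  have hadd: "h (x + y) = h x + h y" for x y by (simp add: h_def map_poly_of_real_add)
  have hmin: "h (- x) = - h x" for x by (simp add: h_def map_poly_of_real_minus)
  have hmult: "h (x * y) = h x * h y" for x y by (simp add: h_def map_poly_of_real_mult)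
  define B :: "complex^'n^'n" where "B = (\<chi> i j. (if i = j then z else 0) - complex_of_real (M$i$j))"
  have "h (charpoly M) = det (\<chi> i j. h ((\<chi> i j. if i = j then [:- (M$i$j), 1:] else [:- (M$i$j):]) $ i $ j))"
    unfolding charpoly_def by (rule det_hom[OF h1 hadd hmin hmult])
  also have "(\<chi> i j. h ((\<chi> i j. if i = j then [:- (M$i$j), 1:] else [:- (M$i$j):]) $ i $ j)) = B"
    by (simp add: B_def h_def vec_eq_iff map_poly_pCons)
  finally have "det B = 0" using root by (simp add: h_def M_def)
  then have ninv: "\<not> invertible B" using invertible_det_nz by blast
  have "\<not> inj ((*v) B)"
  proof
    assume i: "inj ((*v) B)"
    then have "surj ((*v) B)" using vec.linear_inj_imp_surj[OF matrix_vector_mul_linear_gen] by blast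
    with i have "bij ((*v) B)" by (simp add: bij_def)
    with ninv show False using invertible_eq_bij by blast
  qed
  then obtain v where v0: "v \<noteq> 0" and Bv: "B *v v = 0" using vec.inj_iff_eq_0 by blast
  define w where "w = (\<lambda>c::real^'n. \<Sum>j\<in>UNIV. complex_of_real (c$j) * v$j)"
  have eq_i: "z * v$i = (\<Sum>c\<in>A. complex_of_real (p c * c$i) * w c)" for i
  proof -
    have "(B *v v)$i = 0" using Bv by simp
    then have "(\<Sum>j\<in>UNIV. B$i$j * v$j) = 0" by (simp add: matrix_vector_mult_def)
    then have "(\<Sum>j\<in>UNIV. (if i = j then z else 0) * v$j) = (\<Sum>j\<in>UNIV. complex_of_real (M$i$j) * v$j)"
      by (simp add: B_def left_diff_distrib sum_subtractf)
    also have "\<dots> = (\<Sum>j\<in>UNIV. \<Sum>c\<in>A. complex_of_real (p c * c$i) * (complex_of_real (c$j) * v$j))"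
      by (simp add: M_def Vmat_entry[OF fA] sum_distrib_left sum_distrib_right mult_ac)
    also have "\<dots> = (\<Sum>c\<in>A. complex_of_real (p c * c$i) * w c)"
      by (subst sum.swap) (simp add: w_def sum_distrib_left)
    finally have e: "(\<Sum>j\<in>UNIV. (if i = j then z else 0) * v$j) = (\<Sum>c\<in>A. complex_of_real (p c * c$i) * w c)" .
    have "(\<Sum>j\<in>UNIV. (if i = j then z else 0) * v$j) = (\<Sum>j\<in>UNIV. if i = j then z * v$j else 0)"
      by (rule sum.cong) auto
    also have "\<dots> = z * v$i" by simp
    finally show ?thesis using e by simp
  qed
  have "z * (\<Sum>i\<in>UNIV. cnj (v$i) * v$i) = (\<Sum>i\<in>UNIV. cnj (v$i) * (z * v$i))"
    by (simp add: sum_distrib_left mult_ac)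
  also have "\<dots> = (\<Sum>i\<in>UNIV. \<Sum>c\<in>A. complex_of_real (p c) * (complex_of_real (c$i) * cnj (v$i)) * w c)"
    by (simp add: eq_i sum_distrib_left mult_ac)
  also have "\<dots> = (\<Sum>c\<in>A. complex_of_real (p c) * cnj (w c) * w c)"
    by (subst sum.swap) (simp add: w_def sum_distrib_left sum_distrib_right mult_ac)
  also have "\<dots> = (\<Sum>c\<in>A. complex_of_real (p c * (cmod (w c))^2))"
  proof (rule sum.cong[OF refl])
    fix c
    have "complex_of_real ((cmod (w c))^2) = w c * cnj (w c)" by (rule complex_norm_square)
    then show "complex_of_real (p c) * cnj (w c) * w c = complex_of_real (p c * (cmod (w c))^2)"
      by (simp only: of_real_mult) (simp add: mult_ac)
  qed
  also have "\<dots> = complex_of_real (\<Sum>c\<in>A. p c * (cmod (w c))^2)" by simp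
  finally have zN0: "z * (\<Sum>i\<in>UNIV. cnj (v$i) * v$i) = complex_of_real (\<Sum>c\<in>A. p c * (cmod (w c))^2)" .
  have hN: "(\<Sum>i\<in>UNIV. cnj (v$i) * v$i) = complex_of_real (\<Sum>i\<in>UNIV. (cmod (v$i))^2)"
  proof -
    have "(\<Sum>i\<in>UNIV. cnj (v$i) * v$i) = (\<Sum>i\<in>UNIV. complex_of_real ((cmod (v$i))^2))"
      by (rule sum.cong[OF refl]) (simp only: complex_norm_square mult.commute)
    then show ?thesis by simp
  qed
  have zN: "z * complex_of_real (\<Sum>i\<in>UNIV. (cmod (v$i))^2) = complex_of_real (\<Sum>c\<in>A. p c * (cmod (w c))^2)"
    using zN0 unfolding hN .
  have Rnn: "0 \<le> (\<Sum>c\<in>A. p c * (cmod (w c))^2)" using pnn by (intro sum_nonneg) simp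
  obtain i0 where "v$i0 \<noteq> 0" using v0 by (auto simp: vec_eq_iff)
  then have Npos: "0 < (\<Sum>i\<in>UNIV. (cmod (v$i))^2)"
    by (intro sum_pos2[of UNIV i0]) auto
  define N where "N = (\<Sum>i\<in>UNIV. (cmod (v$i))^2)"
  define R where "R = (\<Sum>c\<in>A. p c * (cmod (w c))^2)"
  have "z = complex_of_real (R / N)"
    using zN Npos unfolding N_def[symmetric] R_def[symmetric]
    by (simp add: field_simps)
  then show ?thesis using Rnn Npos unfolding R_def N_def by simp
qed

lemma poly_map_poly_of_real: "poly (map_poly complex_of_real p) (complex_of_real x) = complex_of_real (poly p x)"
  by (induct p) (simp_all add: map_poly_pCons)

lemma poly_prod_list': "poly (prod_list ps) y = prod_list (map (\<lambda>p. poly p y) ps)"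
  by (induct ps) simp_all

lemma prod_list_map_perm:
  fixes f :: "'a \<Rightarrow> 'b::comm_monoid_mult"
  assumes h: "mset xs = mset ys" shows "prod_list (map f xs) = prod_list (map f ys)"
proof -
  have "prod_list (map f xs) = prod_mset (mset (map f xs))" by (rule prod_mset_prod_list[symmetric])
  also have "\<dots> = prod_mset (mset (map f ys))" by (simp add: h)
  also have "\<dots> = prod_list (map f ys)" by (rule prod_mset_prod_list)
  finally show ?thesis .
qed

lemma proots_lin: "proots (prod_list (map (\<lambda>x::real. [:- x, 1:]) ls)) = mset ls"
proof -
  have "0 \<notin> set (map (\<lambda>x::real. [:- x, 1:]) ls)" by auto
  then have "proots (prod_list (map (\<lambda>x::real. [:- x, 1:]) ls)) = sum_list (map proots (map (\<lambda>x::real. [:- x, 1:]) ls))"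
    using proots_prod_list[of "map (\<lambda>x::real. [:- x, 1:]) ls"] by simp
  also have "\<dots> = (\<Sum>x\<leftarrow>ls. {#x#})" by (simp add: o_def proots_linear_factor)
  also have "\<dots> = mset ls" using sum_list_singleton_mset[of "\<lambda>x. x" ls] by simp
  finally show ?thesis .
qed

lemma eigs_props:
  fixes A :: "(real^'n) set" and p :: "real^'n \<Rightarrow> real"
  assumes fA: "finite A" and pnn: "\<forall>a. 0 \<le> p a"
  shows "length (eigs_sorted (Vmat A p)) = CARD('n) \<and> (\<forall>x\<in>set (eigs_sorted (Vmat A p)). 0 \<le> x)"
proof -
  define M where "M = Vmat A p"
  define d where "d = CARD('n)"
  define Q where "Q = (\<lambda>ls. sorted ls \<and> length ls = CARD('n) \<and>
      charpoly M = prod_list (map (\<lambda>x. [:- x, 1:]) ls))"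
  define q where "q = map_poly complex_of_real (charpoly M)"
  have mon: "degree (charpoly M) = d" "lead_coeff (charpoly M) = 1"
    using charpoly_monic[of M] unfolding d_def by (rule conjunct1, rule conjunct2)
  have dq: "degree q = d" unfolding q_def using mon by (simp add: degree_map_poly)
  have lq: "lead_coeff q = 1" using mon dq by (simp add: q_def coeff_map_poly)
  obtain root where rt: "smult (lead_coeff q) (\<Prod>i<degree q. [:-root i, 1:]) = q"
    using complex_poly_decompose' by blast
  then have rt': "q = (\<Prod>i<d. [:-root i, 1:])" using lq dq by simp
  have isroot: "poly q (root i) = 0" if "i < d" for i
    unfolding rt' poly_prod using that by (intro prod_zero) auto
  define r where "r = (\<lambda>i. Re (root i))"
  have rr: "root i = complex_of_real (r i)" if "i < d" for i
    using charpoly_root_nonneg[OF fA pnn isroot[OF that, unfolded q_def M_def]] by (simp add: r_def)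
  have mp: "map_poly complex_of_real (\<Prod>i<d. [:-r i, 1:]) = (\<Prod>i<d. map_poly complex_of_real [:-r i, 1:])"
    by (rule hom_prod) (simp_all add: map_poly_of_real_mult)
  also have "\<dots> = (\<Prod>i<d. [:-root i, 1:])"
    by (rule prod.cong[OF refl]) (simp add: rr map_poly_pCons)
  finally have "map_poly complex_of_real (charpoly M) = map_poly complex_of_real (\<Prod>i<d. [:-r i, 1:])"
    using rt' unfolding q_def by simp
  then have cpr: "charpoly M = (\<Prod>i<d. [:-r i, 1:])" by (rule map_poly_of_real_inj)
  define ls0 where "ls0 = sort (map r [0..<d])"
  have Q0: "Q ls0"
  proof -
    have "prod_list (map (\<lambda>x. [:- x, 1:]) ls0) = prod_list (map (\<lambda>x. [:- x, 1:]) (map r [0..<d]))"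
      unfolding ls0_def by (rule prod_list_map_perm) simp
    also have "\<dots> = (\<Prod>i<d. [:-r i, 1:])"
      using prod.distinct_set_conv_list[of "[0..<d]" "\<lambda>i. [:-r i, 1:]"]
      by (simp add: o_def atLeast0LessThan)
    finally show ?thesis unfolding Q_def ls0_def using cpr by (simp add: d_def)
  qed
  have uniq: "ls = ls0" if "Q ls" for ls
  proof -
    have "mset ls = proots (charpoly M)" using that unfolding Q_def by (simp add: proots_lin)
    moreover have "mset ls0 = proots (charpoly M)" using Q0 unfolding Q_def by (simp add: proots_lin)
    ultimately have "mset ls = mset ls0" by simp
    then show ?thesis using that Q0 unfolding Q_def by (metis properties_for_sort)
  qed
  have ex1: "\<exists>!ls. Q ls" using Q0 uniq by blast
  have QE: "Q (eigs_sorted M)"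
    unfolding eigs_sorted_def Q_def[symmetric] by (rule theI'[OF ex1])
  have nn: "0 \<le> x" if "x \<in> set (eigs_sorted M)" for x
  proof -
    have cp: "charpoly M = prod_list (map (\<lambda>x. [:- x, 1:]) (eigs_sorted M))" using QE unfolding Q_def by simp
    have "poly (prod_list (map (\<lambda>x. [:- x, 1:]) (eigs_sorted M))) x
       = prod_list (map (\<lambda>q. poly q x) (map (\<lambda>x. [:- x, 1:]) (eigs_sorted M)))"
      by (rule poly_prod_list')
    also have "\<dots> = 0" unfolding prod_list_zero_iff using that by force
    finally have "poly (charpoly M) x = 0" unfolding cp .
    then have "poly (map_poly complex_of_real (charpoly (Vmat A p))) (complex_of_real x) = 0"
      by (simp add: poly_map_poly_of_real M_def)
    from charpoly_root_nonneg[OF fA pnn this] show ?thesis by simp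
  qed
  have "length (eigs_sorted M) = CARD('n)" using QE unfolding Q_def by blast
  then show ?thesis using nn unfolding M_def by blast
qed

lemma completed_mono: "completed A T Toff poff Act pis l \<Longrightarrow> l' \<le> l \<Longrightarrow> completed A T Toff poff Act pis l'"
  unfolding completed_def by auto

lemma nat_ceil_ge: "x \<le> real (nat \<lceil>x\<rceil>)"
  by (cases "x \<ge> 0") (auto intro: order_trans[OF le_of_int_ceiling])

lemma epsl_sq: "(epsl l)\<^sup>2 = 1 / 4 ^ l"
proof -
  have "(2::real) ^ (l * 2) = 4 ^ l" by (simp add: mult.commute[of l] power_mult)
  then show ?thesis by (simp add: epsl_def power_divide flip: power_mult)
qed

lemma Vmat_mulv:
  assumes "finite A"
  shows "(Vmat A p *v w) $ i = (\<Sum>c\<in>A. p c * c$i * (c \<bullet> w))"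
proof -
  have "(Vmat A p *v w) $ i = (\<Sum>j\<in>UNIV. (\<Sum>c\<in>A. p c * (c$i * c$j)) * w$j)"
    by (simp add: matrix_vector_mult_def Vmat_entry[OF assms])
  also have "\<dots> = (\<Sum>j\<in>UNIV. \<Sum>c\<in>A. p c * c$i * (c$j * w$j))"
    by (simp add: sum_distrib_right sum_distrib_left mult_ac)
  also have "\<dots> = (\<Sum>c\<in>A. \<Sum>j\<in>UNIV. p c * c$i * (c$j * w$j))"
    by (rule sum.swap)
  also have "\<dots> = (\<Sum>c\<in>A. p c * c$i * (c \<bullet> w))"
    by (simp add: inner_vec_def sum_distrib_left)
  finally show ?thesis .
qed

lemma Vmat_quad:
  assumes "finite A"
  shows "(Vmat A p *v w) \<bullet> w = (\<Sum>c\<in>A. p c * (c \<bullet> w)^2)"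
proof -
  have "(Vmat A p *v w) \<bullet> w = (\<Sum>i\<in>UNIV. (\<Sum>c\<in>A. p c * c$i * (c \<bullet> w)) * w$i)"
    by (simp add: inner_vec_def Vmat_mulv[OF assms])
  also have "\<dots> = (\<Sum>i\<in>UNIV. \<Sum>c\<in>A. p c * (c \<bullet> w) * (c$i * w$i))"
    by (simp add: sum_distrib_right sum_distrib_left mult_ac)
  also have "\<dots> = (\<Sum>c\<in>A. \<Sum>i\<in>UNIV. p c * (c \<bullet> w) * (c$i * w$i))"
    by (rule sum.swap)
  also have "\<dots> = (\<Sum>c\<in>A. p c * (c \<bullet> w) * (\<Sum>i\<in>UNIV. c$i * w$i))"
    by (simp add: sum_distrib_left)
  also have "\<dots> = (\<Sum>c\<in>A. p c * (c \<bullet> w)^2)"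
    by (simp add: inner_vec_def power2_eq_square mult_ac)
  finally show ?thesis .
qed

lemma gfun_pos:
  fixes A :: "(real^'n) set"
  assumes fA: "finite A" and pnn: "\<forall>a. 0 \<le> p a" and a0: "a0 \<in> A" "a0 \<noteq> 0"
  shows "0 < gfun A A p"
proof (cases "invertible (Vmat A p)")
  case False then show ?thesis by (simp add: gfun_def)
next
  case True
  define V where "V = Vmat A p"
  define w where "w = matrix_inv V *v a0"
  have VV: "V ** matrix_inv V = mat 1"
    using True unfolding invertible_def matrix_inv_def V_def by (metis (mono_tags, lifting) someI_ex)
  have Vw: "V *v w = a0"
    unfolding w_def by (simp add: matrix_vector_mul_assoc VV)
  have q: "a0 \<bullet> w = (\<Sum>c\<in>A. p c * (c \<bullet> w)^2)"
    using Vmat_quad[OF fA, of p w] Vw by (simp add: V_def)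
  have qnn: "0 \<le> (\<Sum>c\<in>A. p c * (c \<bullet> w)^2)" using pnn by (intro sum_nonneg) simp
  have "(\<Sum>c\<in>A. p c * (c \<bullet> w)^2) \<noteq> 0"
  proof
    assume z: "(\<Sum>c\<in>A. p c * (c \<bullet> w)^2) = 0"
    then have "\<forall>c\<in>A. p c * (c \<bullet> w)^2 = 0" using pnn fA by (subst (asm) sum_nonneg_eq_0_iff) auto
    then have "\<forall>c\<in>A. p c * (c \<bullet> w) = 0" by auto
    then have "(V *v w) $ i = 0" for i unfolding V_def Vmat_mulv[OF fA]
      by (intro sum.neutral) auto
    then have "V *v w = 0" by (simp add: vec_eq_iff)
    with Vw a0 show False by simp
  qed
  with q qnn have pos: "0 < a0 \<bullet> (matrix_inv V *v a0)" unfolding w_def by simp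
  have "a0 \<bullet> (matrix_inv V *v a0) \<le> Max ((\<lambda>a. a \<bullet> (matrix_inv V *v a)) ` A)"
    using fA a0 by (intro Max_ge) auto
  with pos True show ?thesis by (simp add: gfun_def V_def)
qed

lemma deff_pos:
  fixes A :: "(real^'n) set"
  assumes fA: "finite A" and pnn: "\<forall>a. 0 \<le> poff a" and a0: "a0 \<in> A" "a0 \<noteq> 0" and T1: "1 \<le> T"
  shows "0 < deff A T Toff poff"
proof -
  define Mx where "Mx = Max ((\<lambda>a. (norm a)\<^sup>2) ` A)"
  have "(norm a0)\<^sup>2 \<le> Mx" unfolding Mx_def using fA a0 by (intro Max_ge) auto
  moreover have "0 < (norm a0)\<^sup>2" using a0 by simp
  ultimately have Mx: "0 < Mx" by linarith
  note EP = eigs_props[OF fA pnn]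
  have eig: "0 \<le> eigk (Vmat A poff) k" if "k \<in> {1..CARD('n)}" for k
  proof -
    have "k - 1 < length (eigs_sorted (Vmat A poff))" using EP that by auto
    then have "eigs_sorted (Vmat A poff) ! (k - 1) \<in> set (eigs_sorted (Vmat A poff))" by (rule nth_mem)
    then show ?thesis using EP by (simp add: eigk_def)
  qed
  define S where "S = (\<Sum>k=1..CARD('n). inverse (1 + (real Toff / real T) *
          eigk (Vmat A poff) k / Max ((\<lambda>a. (norm a)\<^sup>2) ` A)))"
  have S: "0 < S" unfolding S_def Mx_def[symmetric]
  proof (rule sum_pos)
    show "finite {1..CARD('n)}" by simp
    show "{1..CARD('n)} \<noteq> {}" by simp
    fix k assume k: "k \<in> {1..CARD('n)}"
    have "0 \<le> (real Toff / real T) * eigk (Vmat A poff) k / Mx"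
      using eig[OF k] Mx T1 by (intro divide_nonneg_pos mult_nonneg_nonneg) auto
    then show "0 < inverse (1 + real Toff / real T * eigk (Vmat A poff) k / Mx)" by simp
  qed
  define G where "G = (if Toff = 0 then \<infinity> else ereal (real T / real Toff) * gfun A A poff)"
  have gp: "0 < gfun A A poff" by (rule gfun_pos[OF fA pnn a0])
  have G: "0 < G"
  proof (cases "Toff = 0")
    case True then show ?thesis by (simp add: G_def)
  next
    case False
    then have tp: "0 < real T / real Toff" using T1 by simp
    show ?thesis
    proof (cases "gfun A A poff")
      case (real g) then show ?thesis using gp tp False T1 by (simp add: G_def)
    next
      case PInf then show ?thesis using tp False T1 by (simp add: G_def)
    next
      case MInf then show ?thesis using gp by simp
    qed
  qed
  have dd: "deff A T Toff poff = real_of_ereal (min (ereal S) G)"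
    unfolding deff_def S_def G_def by simp
  show ?thesis
  proof (cases "G \<le> ereal S")
    case True
    then obtain g where "G = ereal g" using G by (cases G) auto
    then show ?thesis using True G dd by (simp add: min_def)
  next
    case False
    then have "ereal S \<le> G" by simp
    then show ?thesis using S dd by (simp add: min_def)
  qed
qed

lemma exists_nonzero:
  fixes A :: "(real^'n) set"
  assumes "span A = UNIV"
  obtains a0 where "a0 \<in> A" "a0 \<noteq> 0"
proof -
  have "\<exists>a0\<in>A. a0 \<noteq> 0"
  proof (rule ccontr)
    assume "\<not> (\<exists>a0\<in>A. a0 \<noteq> 0)"
    then have "A \<subseteq> {0}" by auto
    then have "span A \<subseteq> span {0}" by (rule span_mono)
    then have "span A \<subseteq> {0}" by simp
    moreover obtain i :: 'n where True by simp
    moreover have "axis i (1::real) \<noteq> 0" by (simp add: axis_eq_0_iff)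
    ultimately show False using assms by auto
  qed
  then show ?thesis using that by blast
qed

theorem lemma4p2:
  fixes A :: "(real^'n) set" and T Toff :: nat and Noff :: "real^'n \<Rightarrow> nat"
    and poff :: "real^'n \<Rightarrow> real"
    and yon :: "nat \<Rightarrow> real^'n \<Rightarrow> nat \<Rightarrow> real" and yoff :: "real^'n \<Rightarrow> nat \<Rightarrow> real"
    and Act :: "nat \<Rightarrow> (real^'n) set" and pis :: "nat \<Rightarrow> real^'n \<Rightarrow> real"
    and th :: "nat \<Rightarrow> real^'n"
  assumes "finite A" and "span A = UNIV"
    and "1 \<le> T"
    and "distr_on A poff"
    and "\<forall>a. real (Noff a) = poff a * real Toff"
    and "oope_run A T Toff Noff poff yon yoff Act pis th"
    and "completed A T Toff poff Act pis lM"
  shows "lM \<le> Hinv A T (real T / (3 * deff A T Toff poff))"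
proof -
  note fA = assms(1) and T1 = assms(3) and run = assms(6) and comp = assms(7)
  have R2: "distr_on (Act l) (pis l)" if "1 \<le> l" "completed A T Toff poff Act pis (l - 1)" "card (Act l) \<noteq> 1" for l
  proof -
    have "\<forall>l\<ge>1. completed A T Toff poff Act pis (l - 1) \<and> card (Act l) \<noteq> 1 \<longrightarrow>
        distr_on (Act l) (pis l) \<and>
        (\<forall>p. distr_on (Act l) p \<longrightarrow>
           logdet (Vmat A (mixd T Toff poff p)) \<le> logdet (Vmat A (mixd T Toff poff (pis l))))"
      using run unfolding oope_run_def by (rule conjunct1[OF conjunct2])
    then show ?thesis using that by blast
  qed
  have R1: "Act 1 = A" using run unfolding oope_run_def by (rule conjunct1)
  have R3: "Act (Suc l) = Act l - {a \<in> Act l. 2 * epsl l \<le> Max ((\<lambda>a'. (a' - a) \<bullet> th l) ` Act l)}"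
    if "1 \<le> l" "completed A T Toff poff Act pis l" for l
  proof -
    have "\<forall>l\<ge>1. completed A T Toff poff Act pis l \<longrightarrow>
        (\<forall>\<theta>. lsobj A T Toff Noff poff yon yoff Act pis l (th l)
              \<le> lsobj A T Toff Noff poff yon yoff Act pis l \<theta>) \<and>
        Act (Suc l) = Act l - {a \<in> Act l. 2 * epsl l \<le> Max ((\<lambda>a'. (a' - a) \<bullet> th l) ` Act l)}"
      using run unfolding oope_run_def by (rule conjunct2[OF conjunct2])
    then show ?thesis using that by blast
  qed
  have pnn: "\<forall>a. 0 \<le> poff a" using assms(4) by (simp add: distr_on_def)
  obtain a0 where a0: "a0 \<in> A" "a0 \<noteq> 0" using exists_nonzero[OF assms(2)] by blast
  define D where "D = deff A T Toff poff"
  have D: "0 < D" unfolding D_def by (rule deff_pos[OF fA pnn a0 T1])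
  define x where "x = real T / (3 * D)"
  define F where "F = (\<lambda>n. \<Sum>l=1..n. 4 ^ l * logterm A T l)"
  have "A \<noteq> {}" using a0 by auto
  then have "0 < card A" using fA by (simp add: card_gt_0_iff)
  then have cA: "1 \<le> card A" by simp
  have lt: "ln 4 \<le> logterm A T l" if "1 \<le> l" for l
  proof -
    have "0 < l ^ 2 * card A * T" using that cA T1 by simp
    then have "1 \<le> real (l ^ 2 * card A * T)" by linarith
    then have "1 \<le> real l ^ 2 * real (card A) * real T" by simp
    then have "4 \<le> 4 * real l ^ 2 * real (card A) * real T" by simp
    then show ?thesis unfolding logterm_def by (intro ln_mono) auto
  qed
  have Fge: "real n * ln 4 \<le> F n" for n
  proof -
    have "(\<Sum>l=1..n. ln 4) \<le> F n" unfolding F_def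
    proof (rule sum_mono)
      fix l assume "l \<in> {1..n}"
      then have "ln 4 \<le> logterm A T l" by (intro lt) auto
      moreover have "(1::real) \<le> 4 ^ l" by simp
      moreover have "0 \<le> ln (4::real)" by simp
      ultimately have "1 * ln 4 \<le> 4 ^ l * logterm A T l"
        by (intro mult_mono) auto
      then show "ln 4 \<le> 4 ^ l * logterm A T l" by simp
    qed
    then show ?thesis by simp
  qed
  have fin: "finite {n::nat. F n \<le> x}"
  proof (rule finite_subset)
    show "{n::nat. F n \<le> x} \<subseteq> {..nat \<lceil>x / ln 4\<rceil>}"
    proof
      fix n assume "n \<in> {n::nat. F n \<le> x}"
      then have "real n * ln 4 \<le> x" using Fge[of n] by simp
      then have "real n \<le> x / ln 4" by (simp add: field_simps)
      then show "n \<in> {..nat \<lceil>x / ln 4\<rceil>}" by (simp add: le_nat_iff) linarith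
    qed
  qed simp
  show ?thesis
  proof (cases "lM = 0")
    case True then show ?thesis by simp
  next
    case False
    have sub: "Act (Suc k) \<subseteq> A" if "Suc k \<le> lM" for k
      using that
    proof (induct k)
      case 0 then show ?case using R1 by simp
    next
      case (Suc k)
      then have IH: "Act (Suc k) \<subseteq> A" by simp
      have "completed A T Toff poff Act pis (Suc k)" using completed_mono[OF comp, of "Suc k"] Suc.prems by simp
      then have "Act (Suc (Suc k)) = Act (Suc k) - {a \<in> Act (Suc k). 2 * epsl (Suc k) \<le> Max ((\<lambda>a'. (a' - a) \<bullet> th (Suc k)) ` Act (Suc k))}"
        by (intro R3) simp_all
      then show ?case using IH by auto
    qed
    have sum1: "(\<Sum>a\<in>A. pis j a) = 1" if j: "j \<in> {1..lM}" for j
    proof -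
      have c1: "completed A T Toff poff Act pis (j - 1)" using j by (intro completed_mono[OF comp]) auto
      have "card (Act j) \<noteq> 1" using comp j unfolding completed_def by blast
      with c1 have "distr_on (Act j) (pis j)" using j by (intro R2) auto
      moreover have "Act j \<subseteq> A" using sub[of "j - 1"] j by simp
      ultimately show ?thesis unfolding distr_on_def
        using sum.mono_neutral_right[OF fA, of "Act j" "pis j"] by auto
    qed
    have pisnn: "0 \<le> pis j a" if j: "j \<in> {1..lM}" for j a
    proof -
      have c1: "completed A T Toff poff Act pis (j - 1)" using j by (intro completed_mono[OF comp]) auto
      have "card (Act j) \<noteq> 1" using comp j unfolding completed_def by blast
      with c1 have "distr_on (Act j) (pis j)" using j by (intro R2) auto
      then show ?thesis by (simp add: distr_on_def)
    qed
    have phase: "3 * D * (4 ^ j * logterm A T j) \<le> real (\<Sum>a\<in>A. non A T Toff poff pis j a)"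
      if j: "j \<in> {1..lM}" for j
    proof -
      have "3 * D * (4 ^ j * logterm A T j) = (\<Sum>a\<in>A. 3 * D * pis j a * logterm A T j / (epsl j)\<^sup>2)"
      proof -
        have "(\<Sum>a\<in>A. 3 * D * pis j a * logterm A T j / (epsl j)\<^sup>2) = (\<Sum>a\<in>A. pis j a) * (3 * D * (4 ^ j * logterm A T j))"
          by (simp add: epsl_sq sum_distrib_right) (simp add: mult_ac)
        then show ?thesis using sum1[OF j] by simp
      qed
      also have "\<dots> \<le> (\<Sum>a\<in>A. real (non A T Toff poff pis j a))"
        by (rule sum_mono) (simp add: non_def D_def nat_ceil_ge)
      finally show ?thesis by simp
    qed
    have "3 * D * F lM = (\<Sum>j=1..lM. 3 * D * (4 ^ j * logterm A T j))"
      unfolding F_def by (simp add: sum_distrib_left)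
    also have "\<dots> \<le> (\<Sum>j=1..lM. real (\<Sum>a\<in>A. non A T Toff poff pis j a))"
      by (rule sum_mono) (rule phase)
    also have "\<dots> = real (onUsed A T Toff poff pis lM)" by (simp add: onUsed_def)
    also have "\<dots> \<le> real T" using comp False unfolding completed_def by auto
    finally have "3 * D * F lM \<le> real T" .
    then have "F lM \<le> x" unfolding x_def using D by (simp add: field_simps)
    then have "lM \<le> Max {n::nat. F n \<le> x}" using fin by (intro Max_ge) auto
    then show ?thesis unfolding Hinv_def F_def x_def D_def by simp
  qed
qed

end
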